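(* Let \(X\) be a nonempty set, let \((Q, \preccurlyeq_Q)\) be a poset with smallest element \(q_0\), and let \(d \colon X^2 \to Q\) be a \(Q\)-pseudoultrametric on \(X\). Then \(d^{-1}(q_0)=\{\langle x,y\rangle\in X^2: d(x,y)=q_0\}\) is an equivalence relation on \(X\) and \(d\) is \(q_0\)-coherent.
   Context: A mapping \(d\colon X^2\to Q\) is a \(Q\)-pseudoultrametric if \(d\) is symmetric, \(d(x,x)=q_0\) for all \(x\in X\), and for every triple \(\langle x_1,x_2,x_3\rangle\) of points of \(X\) there is a permutation \((i_1,i_2,i_3)\) of \((1,2,3)\) with \(d(x_{i_1},x_{i_3})\preccurlyeq_Q d(x_{i_1},x_{i_2})\) and \(d(x_{i_1},x_{i_2})=d(x_{i_2},x_{i_3})\). A mapping \(\Phi\) with domain \(X^2\) is strongly consistent with an equivalence relation \(R\) on \(X\) if \(\langle x_1,x_2\rangle\in R\) and \(\langle x_3,x_4\rangle\in R\) imply \(\Phi(x_1,x_3)=\Phi(x_2,x_4)\); for \(a_0\) in the range of \(\Phi\), \(\Phi\) is \(a_0\)-coherent if the fiber \(\Phi^{-1}(a_0)\) is an equivalence relation on \(X\) and \(\Phi\) is strongly consistent with it. *)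

theory Defs
  imports Main
begin

definition poset_on :: "'q set \<Rightarrow> ('q \<Rightarrow> 'q \<Rightarrow> bool) \<Rightarrow> bool" where
  "poset_on Q le \<longleftrightarrow>
     (\<forall>q\<in>Q. le q q) \<and>
     (\<forall>p\<in>Q. \<forall>q\<in>Q. le p q \<and> le q p \<longrightarrow> p = q) \<and>
     (\<forall>p\<in>Q. \<forall>q\<in>Q. \<forall>r\<in>Q. le p q \<and> le q r \<longrightarrow> le p r)"

definition smallest_el :: "'q set \<Rightarrow> ('q \<Rightarrow> 'q \<Rightarrow> bool) \<Rightarrow> 'q \<Rightarrow> bool" where
  "smallest_el Q le q0 \<longleftrightarrow> q0 \<in> Q \<and> (\<forall>q\<in>Q. le q0 q)"

definition pseudoultrametric ::
  "'a set \<Rightarrow> 'q set \<Rightarrow> ('q \<Rightarrow> 'q \<Rightarrow> bool) \<Rightarrow> 'q \<Rightarrow> ('a \<Rightarrow> 'a \<Rightarrow> 'q) \<Rightarrow> bool" where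
  "pseudoultrametric X Q le q0 d \<longleftrightarrow>
     (\<forall>x\<in>X. \<forall>y\<in>X. d x y \<in> Q) \<and>
     (\<forall>x\<in>X. \<forall>y\<in>X. d x y = d y x) \<and>
     (\<forall>x\<in>X. d x x = q0) \<and>
     (\<forall>x1\<in>X. \<forall>x2\<in>X. \<forall>x3\<in>X. let x = (\<lambda>i::nat. if i = 1 then x1 else if i = 2 then x2 else x3) in
        \<exists>i1 i2 i3. {i1, i2, i3} = {1, 2, 3} \<and>
          le (d (x i1) (x i3)) (d (x i1) (x i2)) \<and> d (x i1) (x i2) = d (x i2) (x i3))"

definition strongly_consistent :: "'a set \<Rightarrow> ('a \<Rightarrow> 'a \<Rightarrow> 'b) \<Rightarrow> ('a \<times> 'a) set \<Rightarrow> bool" where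
  "strongly_consistent X Phi R \<longleftrightarrow>
     (\<forall>x1\<in>X. \<forall>x2\<in>X. \<forall>x3\<in>X. \<forall>x4\<in>X.
        (x1, x2) \<in> R \<and> (x3, x4) \<in> R \<longrightarrow> Phi x1 x3 = Phi x2 x4)"

definition fiber2 :: "'a set \<Rightarrow> ('a \<Rightarrow> 'a \<Rightarrow> 'b) \<Rightarrow> 'b \<Rightarrow> ('a \<times> 'a) set" where
  "fiber2 X Phi a0 = {(x, y). x \<in> X \<and> y \<in> X \<and> Phi x y = a0}"

definition coherent :: "'a set \<Rightarrow> ('a \<Rightarrow> 'a \<Rightarrow> 'b) \<Rightarrow> 'b \<Rightarrow> bool" where
  "coherent X Phi a0 \<longleftrightarrow>
     a0 \<in> {Phi x y | x y. x \<in> X \<and> y \<in> X} \<and>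
     equiv X (fiber2 X Phi a0) \<and> strongly_consistent X Phi (fiber2 X Phi a0)"

end

theory Submission
  imports Defs
begin

lemma perm3:
  fixes i1 i2 i3 :: nat
  assumes "{i1, i2, i3} = {1, 2, 3}"
  shows "(i1=1\<and>i2=2\<and>i3=3) \<or> (i1=1\<and>i2=3\<and>i3=2) \<or> (i1=2\<and>i2=1\<and>i3=3) \<or>
         (i1=2\<and>i2=3\<and>i3=1) \<or> (i1=3\<and>i2=1\<and>i3=2) \<or> (i1=3\<and>i2=2\<and>i3=1)"
proof -
  have a: "i1 = 1 \<or> i1 = 2 \<or> i1 = 3" "i2 = 1 \<or> i2 = 2 \<or> i2 = 3" "i3 = 1 \<or> i3 = 2 \<or> i3 = 3"
    using assms by (metis insertCI insertE empty_iff)+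
  have b: "i1 = 1 \<or> i2 = 1 \<or> i3 = 1" "i1 = 2 \<or> i2 = 2 \<or> i3 = 2" "i1 = 3 \<or> i2 = 3 \<or> i3 = 3"
    using assms by (metis insertCI insertE empty_iff)+
  show ?thesis using a b by presburger
qed

lemma tri:
  assumes "pseudoultrametric X Q le q0 d" "x \<in> X" "y \<in> X" "z \<in> X"
  shows "(d x y = d y z \<and> le (d x z) (d x y)) \<or> (d y x = d x z \<and> le (d y z) (d y x))
       \<or> (d x z = d z y \<and> le (d x y) (d x z))"
proof -
  have sym: "\<And>a b. a \<in> X \<Longrightarrow> b \<in> X \<Longrightarrow> d a b = d b a"
    using assms(1) unfolding pseudoultrametric_def by blast
  obtain i1 i2 i3 where P: "{i1, i2, i3} = {1::nat, 2, 3}"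
    and L: "le (d ((\<lambda>i::nat. if i = 1 then x else if i = 2 then y else z) i1) ((\<lambda>i::nat. if i = 1 then x else if i = 2 then y else z) i3))
               (d ((\<lambda>i::nat. if i = 1 then x else if i = 2 then y else z) i1) ((\<lambda>i::nat. if i = 1 then x else if i = 2 then y else z) i2))"
    and E: "d ((\<lambda>i::nat. if i = 1 then x else if i = 2 then y else z) i1) ((\<lambda>i::nat. if i = 1 then x else if i = 2 then y else z) i2)
          = d ((\<lambda>i::nat. if i = 1 then x else if i = 2 then y else z) i2) ((\<lambda>i::nat. if i = 1 then x else if i = 2 then y else z) i3)"
  proof -
    have H: "\<forall>x1\<in>X. \<forall>x2\<in>X. \<forall>x3\<in>X. let x = (\<lambda>i::nat. if i = 1 then x1 else if i = 2 then x2 else x3) in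
        \<exists>i1 i2 i3. {i1, i2, i3} = {1, 2, 3} \<and>
          le (d (x i1) (x i3)) (d (x i1) (x i2)) \<and> d (x i1) (x i2) = d (x i2) (x i3)"
      using assms(1) unfolding pseudoultrametric_def by (elim conjE) assumption
    note H2 = H[rule_format, OF assms(2-4), unfolded Let_def]
    show ?thesis using H2 that by blast
  qed
  from perm3[OF P] show ?thesis
    using L E by (elim disjE conjE; simp; metis sym assms(2-4))
qed

theorem proposition3p16:
  fixes X :: "'a set" and Q :: "'q set" and le :: "'q \<Rightarrow> 'q \<Rightarrow> bool"
    and q0 :: 'q and d :: "'a \<Rightarrow> 'a \<Rightarrow> 'q"
  assumes "X \<noteq> {}"
    and "poset_on Q le"
    and "smallest_el Q le q0"
    and "pseudoultrametric X Q le q0 d"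
  shows "equiv X (fiber2 X d q0) \<and> coherent X d q0"
proof -
  have sym: "\<And>a b. a \<in> X \<Longrightarrow> b \<in> X \<Longrightarrow> d a b = d b a"
    and inQ: "\<And>a b. a \<in> X \<Longrightarrow> b \<in> X \<Longrightarrow> d a b \<in> Q"
    and refl: "\<And>a. a \<in> X \<Longrightarrow> d a a = q0"
    using assms(4) unfolding pseudoultrametric_def by blast+
  have q0Q: "q0 \<in> Q" and sm: "\<And>q. q \<in> Q \<Longrightarrow> le q0 q"
    using assms(3) unfolding smallest_el_def by blast+
  have anti: "\<And>q. q \<in> Q \<Longrightarrow> le q q0 \<Longrightarrow> q = q0"
  proof -
    fix q assume "q \<in> Q" "le q q0"
    moreover have "\<forall>p\<in>Q. \<forall>q\<in>Q. le p q \<and> le q p \<longrightarrow> p = q" using assms(2) unfolding poset_on_def by blast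
    ultimately show "q = q0" using sm q0Q by blast
  qed
  have key: "\<And>x y z. x \<in> X \<Longrightarrow> y \<in> X \<Longrightarrow> z \<in> X \<Longrightarrow> d x y = q0 \<Longrightarrow> d x z = d y z"
  proof -
    fix x y z assume xyz: "x \<in> X" "y \<in> X" "z \<in> X" and h: "d x y = q0"
    from tri[OF assms(4) xyz] show "d x z = d y z"
    proof (elim disjE)
      assume "d x y = d y z \<and> le (d x z) (d x y)"
      then show ?thesis using anti inQ xyz h by metis
    next
      assume "d y x = d x z \<and> le (d y z) (d y x)"
      then show ?thesis using anti inQ xyz h sym by metis
    next
      assume "d x z = d z y \<and> le (d x y) (d x z)"
      then show ?thesis using xyz sym by metis
    qed
  qed
  have eq: "equiv X (fiber2 X d q0)"
    unfolding equiv_def refl_on_def sym_def trans_def fiber2_def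
  proof (intro conjI allI impI)
    show "{(x, y). x \<in> X \<and> y \<in> X \<and> d x y = q0} \<subseteq> X \<times> X" by blast
    show "\<forall>x\<in>X. (x, x) \<in> {(x, y). x \<in> X \<and> y \<in> X \<and> d x y = q0}" using refl by blast
  next
    fix x y assume "(x, y) \<in> {(x, y). x \<in> X \<and> y \<in> X \<and> d x y = q0}"
    then show "(y, x) \<in> {(x, y). x \<in> X \<and> y \<in> X \<and> d x y = q0}" using sym by auto
  next
    fix x y z assume "(x, y) \<in> {(x, y). x \<in> X \<and> y \<in> X \<and> d x y = q0}"
      "(y, z) \<in> {(x, y). x \<in> X \<and> y \<in> X \<and> d x y = q0}"
    then have "x \<in> X" "y \<in> X" "z \<in> X" "d x y = q0" "d y z = q0" by auto
    then have "d x z = q0" using key[of y x z] sym by metis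
    then show "(x, z) \<in> {(x, y). x \<in> X \<and> y \<in> X \<and> d x y = q0}" using \<open>x \<in> X\<close> \<open>z \<in> X\<close> by blast
  qed
  have sc: "strongly_consistent X d (fiber2 X d q0)"
    unfolding strongly_consistent_def fiber2_def
  proof (intro ballI impI)
    fix x1 x2 x3 x4 assume X: "x1 \<in> X" "x2 \<in> X" "x3 \<in> X" "x4 \<in> X"
      and "(x1, x2) \<in> {(x, y). x \<in> X \<and> y \<in> X \<and> d x y = q0} \<and> (x3, x4) \<in> {(x, y). x \<in> X \<and> y \<in> X \<and> d x y = q0}"
    then have h: "d x1 x2 = q0" "d x3 x4 = q0" by auto
    have "d x1 x3 = d x2 x3" using key X h by blast
    also have "\<dots> = d x3 x2" using sym X by blast
    also have "\<dots> = d x4 x2" using key X h by blast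
    also have "\<dots> = d x2 x4" using sym X by blast
    finally show "d x1 x3 = d x2 x4" .
  qed
  obtain x where "x \<in> X" using assms(1) by blast
  then have "q0 \<in> {d x y | x y. x \<in> X \<and> y \<in> X}" using refl by force
  then show ?thesis using eq sc unfolding coherent_def by blast
qed

end
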